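(* Let $n\ge 2$ and let $q=e^{i\theta}$ with $\theta\in\mathbb{R}$ and $|\theta|<2\pi/n$ (so $q$ is specialized to a complex number). Then for every $\sigma\in\mathrm{B}_n$, every pole $s\in\mathbb{C}$ of $\zeta(e^{-s},\sigma;\beta_{n,q})$ satisfies $\mathrm{Re}(s)=0$.
   Context: $\mathrm{B}_n$ is the braid group on $n$ strands with standard generators $\sigma_1,\dots,\sigma_{n-1}$. The Burau representation $\beta_{n,q}$ is the homomorphism from $\mathrm{B}_n$ to invertible $n\times n$ matrices over $\mathbb{Z}[q^{\pm1}]$ with $\beta_{n,q}(\sigma_i)=I_{i-1}\oplus\begin{pmatrix}1-q&1\\ q&0\end{pmatrix}\oplus I_{n-i-1}$; for $q\in\mathbb{C}^\times$ it is specialized to complex matrices. The braid zeta function is $\zeta(s,\sigma;\beta_{n,q}):=\det(I_n-\beta_{n,q}(\sigma)s)^{-1}$. *)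

theory Defs
  imports "HOL-Analysis.Analysis" "Jordan_Normal_Form.Determinant"
begin

text \<open>Pole, as in HOL-Complex_Analysis (Complex_Singularities.is_pole).\<close>
definition is_pole :: "('a::topological_space \<Rightarrow> 'b::real_normed_vector) \<Rightarrow> 'a \<Rightarrow> bool"
  where "is_pole f a = (LIM x (at a). f x :> at_infinity)"

text \<open>Burau matrix of the generator sigma_i (1 \<le> i \<le> n-1); rows/columns are 0-indexed,
  so the 2x2 block occupies rows/columns i-1 and i.\<close>
definition burau_gen :: "nat \<Rightarrow> complex \<Rightarrow> nat \<Rightarrow> complex mat" where
  "burau_gen n q i = mat n n (\<lambda>(r, c).
     if r = i - 1 \<and> c = i - 1 then 1 - q
     else if r = i - 1 \<and> c = i then 1
     else if r = i \<and> c = i - 1 then q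
     else if r = i \<and> c = i then 0
     else if r = c then 1 else 0)"

text \<open>Burau matrix of sigma_i^{-1} (the inverse of burau_gen, for q \<noteq> 0).\<close>
definition burau_gen_inv :: "nat \<Rightarrow> complex \<Rightarrow> nat \<Rightarrow> complex mat" where
  "burau_gen_inv n q i = mat n n (\<lambda>(r, c).
     if r = i - 1 \<and> c = i - 1 then 0
     else if r = i - 1 \<and> c = i then inverse q
     else if r = i \<and> c = i - 1 then 1
     else if r = i \<and> c = i then 1 - inverse q
     else if r = c then 1 else 0)"

text \<open>Braids in B_n are represented by words in the generators: a letter (i, True) is
  sigma_i, a letter (i, False) is sigma_i^{-1}; a word is valid if 1 \<le> i \<le> n-1.\<close>
type_synonym braid_word = "(nat \<times> bool) list"

definition braid_word :: "nat \<Rightarrow> braid_word \<Rightarrow> bool" where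
  "braid_word n w \<longleftrightarrow> (\<forall>(i, b) \<in> set w. 1 \<le> i \<and> i \<le> n - 1)"

fun burau :: "nat \<Rightarrow> complex \<Rightarrow> braid_word \<Rightarrow> complex mat" where
  "burau n q [] = 1\<^sub>m n"
| "burau n q ((i, b) # w) =
     (if b then burau_gen n q i else burau_gen_inv n q i) * burau n q w"

definition braid_zeta :: "nat \<Rightarrow> complex \<Rightarrow> braid_word \<Rightarrow> complex \<Rightarrow> complex" where
  "braid_zeta n q w s = inverse (det (1\<^sub>m n - s \<cdot>\<^sub>m burau n q w))"

end

theory Submission
  imports Defs
begin


lemma gen_apply:
  assumes x: "x \<in> carrier_vec n" and i: "1 \<le> i" "i \<le> n - 1"
  shows "burau_gen n q i *\<^sub>v x = vec n (\<lambda>r. if r = i - 1 then (1-q) * x$(i-1) + x$i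
            else if r = i then q * x$(i-1) else x$r)"
proof (rule eq_vecI)
  fix r assume r: "r < dim_vec (vec n (\<lambda>r. if r = i - 1 then (1-q) * x$(i-1) + x$i
            else if r = i then q * x$(i-1) else x$r))"
  hence r: "r < n" by simp
  have "(burau_gen n q i *\<^sub>v x) $ r = (\<Sum>c<n. burau_gen n q i $$ (r,c) * x$c)"
    using r x by (simp add: burau_gen_def scalar_prod_def atLeast0LessThan)
  also have "\<dots> = (\<Sum>c<n. (if c = i - 1 then (if r = i - 1 then 1 - q else if r = i then q else 0) * x$(i-1) else 0)
     + (if c = i then (if r = i - 1 then 1 else if r = i then 0 else 0) * x$i else 0)
     + (if c = r \<and> r \<noteq> i - 1 \<and> r \<noteq> i then x$r else 0))"
    by (rule sum.cong, simp, insert r i, auto simp: burau_gen_def)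
  also have "\<dots> = (if r = i - 1 then (1-q) * x$(i-1) + x$i
            else if r = i then q * x$(i-1) else x$r)"
    using r i by (simp add: sum.distrib; linarith)
  finally show "(burau_gen n q i *\<^sub>v x) $ r = vec n (\<lambda>r. if r = i - 1 then (1-q) * x$(i-1) + x$i
            else if r = i then q * x$(i-1) else x$r) $ r" using r by simp
qed (simp add: burau_gen_def)

lemma gen_inv_apply:
  assumes x: "x \<in> carrier_vec n" and i: "1 \<le> i" "i \<le> n - 1"
  shows "burau_gen_inv n q i *\<^sub>v x = vec n (\<lambda>r. if r = i - 1 then inverse q * x$i
            else if r = i then x$(i-1) + (1 - inverse q) * x$i else x$r)"
proof (rule eq_vecI)
  fix r assume r: "r < dim_vec (vec n (\<lambda>r. if r = i - 1 then inverse q * x$i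
            else if r = i then x$(i-1) + (1 - inverse q) * x$i else x$r))"
  hence r: "r < n" by simp
  have "(burau_gen_inv n q i *\<^sub>v x) $ r = (\<Sum>c<n. burau_gen_inv n q i $$ (r,c) * x$c)"
    using r x by (simp add: burau_gen_inv_def scalar_prod_def atLeast0LessThan)
  also have "\<dots> = (\<Sum>c<n. (if c = i - 1 then (if r = i - 1 then 0 else if r = i then 1 else 0) * x$(i-1) else 0)
     + (if c = i then (if r = i - 1 then inverse q else if r = i then 1 - inverse q else 0) * x$i else 0)
     + (if c = r \<and> r \<noteq> i - 1 \<and> r \<noteq> i then x$r else 0))"
    by (rule sum.cong, simp, insert r i, auto simp: burau_gen_inv_def)
  also have "\<dots> = (if r = i - 1 then inverse q * x$i
            else if r = i then x$(i-1) + (1 - inverse q) * x$i else x$r)"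
    using r i by (simp add: sum.distrib; linarith)
  finally show "(burau_gen_inv n q i *\<^sub>v x) $ r = vec n (\<lambda>r. if r = i - 1 then inverse q * x$i
            else if r = i then x$(i-1) + (1 - inverse q) * x$i else x$r) $ r" using r by simp
qed (simp add: burau_gen_inv_def)



definition ps :: "complex vec \<Rightarrow> nat \<Rightarrow> complex" where
  "ps x j = (\<Sum>k<j. x$k)"

lemma ps_Suc: "ps x (Suc j) = ps x j + x$j"
  by (simp add: ps_def)

lemma ps_local:
  fixes x y :: "complex vec"
  assumes i: "1 \<le> i" "i < n"
    and same: "\<And>k. k < n \<Longrightarrow> k \<noteq> i - 1 \<Longrightarrow> k \<noteq> i \<Longrightarrow> y$k = x$k"
    and pair: "y$(i-1) + y$i = x$(i-1) + x$i"
    and j: "j \<le> n" "j \<noteq> i"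
  shows "ps y j = ps x j"
proof (cases "j < i")
  case True
  then show ?thesis unfolding ps_def using same i j by (intro sum.cong) auto
next
  case False
  hence ji: "i < j" using j by auto
  have "i - 1 < j" using ji by arith
  have "ps y j = (\<Sum>k<j. x$k + ((if k = i - 1 then y$(i-1) - x$(i-1) else 0)
          + (if k = i then y$i - x$i else 0)))"
    unfolding ps_def using same i j ji by (intro sum.cong) auto
  also have "\<dots> = ps x j + ((y$(i-1) - x$(i-1)) + (y$i - x$i))"
    using ji i \<open>i - 1 < j\<close> by (simp add: sum.distrib ps_def)
  also have "\<dots> = ps x j" using pair by (simp add: algebra_simps)
  finally show ?thesis .
qed

lemma gen_facts:
  fixes q :: complex
  assumes x: "x \<in> carrier_vec n" and i: "1 \<le> i" "i \<le> n - 1"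
  defines "y \<equiv> burau_gen n q i *\<^sub>v x"
  shows "y \<in> carrier_vec n" "\<And>j. j \<le> n \<Longrightarrow> j \<noteq> i \<Longrightarrow> ps y j = ps x j"
    "ps y i = q * ps x (i-1) - q * ps x i + ps x (i+1)"
proof -
  have i': "i - 1 < n" "i < n" "i \<noteq> i - 1" using i by auto
  have yv: "y = vec n (\<lambda>r. if r = i - 1 then (1-q) * x$(i-1) + x$i
            else if r = i then q * x$(i-1) else x$r)"
    unfolding y_def using gen_apply[OF x i] .
  show "y \<in> carrier_vec n" unfolding yv by simp
  have e1: "y$(i-1) = (1-q) * x$(i-1) + x$i" unfolding yv using i' by simp
  have e2: "y$i = q * x$(i-1)" unfolding yv using i' i by simp
  show "\<And>j. j \<le> n \<Longrightarrow> j \<noteq> i \<Longrightarrow> ps y j = ps x j"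
    by (rule ps_local[of i n]) (use i' i in \<open>auto simp: yv e1 e2 algebra_simps\<close>)
  have ii: "i = Suc (i - 1)" using i by auto
  have "ps y i = ps y (i-1) + y$(i-1)" by (subst ii, simp add: ps_Suc)
  also have "ps y (i-1) = ps x (i-1)"
    by (rule ps_local[of i n]) (use i' i in \<open>auto simp: yv e1 e2 algebra_simps\<close>)
  finally have A: "ps y i = ps x (i-1) + y$(i-1)" .
  have B: "ps x i = ps x (i-1) + x$(i-1)" by (subst ii, simp add: ps_Suc)
  have C: "ps x (i+1) = ps x i + x$i" by (simp add: ps_Suc)
  show "ps y i = q * ps x (i-1) - q * ps x i + ps x (i+1)"
    unfolding A C B e1 by (simp add: algebra_simps)
qed

lemma gen_inv_facts:
  fixes q :: complex
  assumes x: "x \<in> carrier_vec n" and i: "1 \<le> i" "i \<le> n - 1"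
  defines "y \<equiv> burau_gen_inv n q i *\<^sub>v x"
  shows "y \<in> carrier_vec n" "\<And>j. j \<le> n \<Longrightarrow> j \<noteq> i \<Longrightarrow> ps y j = ps x j"
    "ps y i = ps x (i-1) + inverse q * (ps x (i+1) - ps x i)"
proof -
  have i': "i - 1 < n" "i < n" "i \<noteq> i - 1" using i by auto
  have yv: "y = vec n (\<lambda>r. if r = i - 1 then inverse q * x$i
            else if r = i then x$(i-1) + (1 - inverse q) * x$i else x$r)"
    unfolding y_def using gen_inv_apply[OF x i] .
  show "y \<in> carrier_vec n" unfolding yv by simp
  have e1: "y$(i-1) = inverse q * x$i" unfolding yv using i' by simp
  have e2: "y$i = x$(i-1) + (1 - inverse q) * x$i" unfolding yv using i' i by simp
  show "\<And>j. j \<le> n \<Longrightarrow> j \<noteq> i \<Longrightarrow> ps y j = ps x j"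
    by (rule ps_local[of i n]) (use i' i in \<open>auto simp: yv e1 e2 algebra_simps\<close>)
  have ii: "i = Suc (i - 1)" using i by auto
  have "ps y i = ps y (i-1) + y$(i-1)" by (subst ii, simp add: ps_Suc)
  also have "ps y (i-1) = ps x (i-1)"
    by (rule ps_local[of i n]) (use i' i in \<open>auto simp: yv e1 e2 algebra_simps\<close>)
  finally have A: "ps y i = ps x (i-1) + y$(i-1)" .
  have B: "ps x i = ps x (i-1) + x$(i-1)" by (subst ii, simp add: ps_Suc)
  have C: "ps x (i+1) = ps x i + x$i" by (simp add: ps_Suc)
  show "ps y i = ps x (i-1) + inverse q * (ps x (i+1) - ps x i)"
    unfolding A C B e1 by (simp add: algebra_simps)
qed



definition loc :: "complex \<Rightarrow> complex \<Rightarrow> complex \<Rightarrow> complex \<Rightarrow> real" where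
  "loc r u y v = 2 * Re r * (cmod y)^2 + 2 * Re (- cnj r * cnj u * y) + 2 * Re (- cnj r * cnj y * v)"

definition QF :: "nat \<Rightarrow> complex \<Rightarrow> (nat \<Rightarrow> complex) \<Rightarrow> real" where
  "QF n r a = 2 * Re r * (\<Sum>j\<in>{1..<n}. (cmod (a j))^2) + (\<Sum>j<n. 2 * Re (- cnj r * cnj (a j) * a (Suc j)))"

lemma re2: "complex_of_real (2 * Re z) = z + cnj z"
  by (rule complex_add_cnj[symmetric])

lemma nsq: "complex_of_real ((cmod z)^2) = z * cnj z"
  by (rule complex_norm_square)

lemma loc_c: "complex_of_real (loc r u y v) = (r + cnj r) * (y * cnj y) + ((- cnj r * cnj u * y) + cnj (- cnj r * cnj u * y))
   + ((- cnj r * cnj y * v) + cnj (- cnj r * cnj y * v))"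
proof -
  have "complex_of_real (loc r u y v) = complex_of_real (2 * Re r) * complex_of_real ((cmod y)^2)
     + complex_of_real (2 * Re (- cnj r * cnj u * y)) + complex_of_real (2 * Re (- cnj r * cnj y * v))"
    unfolding loc_def by simp
  also have "\<dots> = (r + cnj r) * (y * cnj y) + ((- cnj r * cnj u * y) + cnj (- cnj r * cnj u * y))
   + ((- cnj r * cnj y * v) + cnj (- cnj r * cnj y * v))"
    by (simp only: re2 nsq)
  finally show ?thesis .
qed

definition Ef :: "complex \<Rightarrow> complex \<Rightarrow> complex \<Rightarrow> complex \<Rightarrow> complex \<Rightarrow> complex \<Rightarrow> complex \<Rightarrow> complex \<Rightarrow> complex" where
  "Ef r s u U y Y v V = (r+s)*(y*Y) + (-s*U*y) + (-r*u*Y) + (-s*Y * v) + (-r*y*V)"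

lemma loc_E: "complex_of_real (loc r u y v) = Ef r (cnj r) u (cnj u) y (cnj y) v (cnj v)"
  unfolding loc_c Ef_def by (simp add: algebra_simps)

lemma Ef_inv:
  fixes r u U y Y v V :: complex
  assumes "r \<noteq> 0"
  shows "Ef r (inverse r) u U (v + r^2*u - r^2*y) (V + (inverse r)^2*U - (inverse r)^2*Y) v V
     = Ef r (inverse r) u U y Y v V"
  unfolding Ef_def using assms by (simp add: field_simps power2_eq_square power3_eq_cube)

lemma loc_inv:
  assumes r: "cmod r = 1"
  shows "loc r u (v + r^2*u - r^2*y) v = loc r u y v"
proof -
  have rs: "r * cnj r = 1"
    using r by (metis complex_norm_square norm_one of_real_1 power_one)
  have r0: "r \<noteq> 0" using r by auto
  have cr: "cnj r = inverse r" using rs r0 by (simp add: field_simps)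
  have cy: "cnj (v + r^2*u - r^2*y) = cnj v + (inverse r)^2 * cnj u - (inverse r)^2 * cnj y"
    by (simp add: cr[symmetric])
  have "complex_of_real (loc r u (v + r^2*u - r^2*y) v) = complex_of_real (loc r u y v)"
    unfolding loc_E cy unfolding cr by (rule Ef_inv[OF r0])
  thus ?thesis by simp
qed



lemma loc_inv2:
  assumes r: "cmod r = 1"
  shows "loc r u (u + inverse (r^2) * (v - y)) v = loc r u y v"
proof -
  have r0: "r \<noteq> 0" using r by auto
  have "v + r^2*u - r^2*(u + inverse (r^2) * (v - y)) = y" using r0 by (simp add: field_simps)
  hence "loc r u y v = loc r u (v + r^2*u - r^2*(u + inverse (r^2) * (v - y))) v" by simp
  also have "\<dots> = loc r u (u + inverse (r^2) * (v - y)) v" by (rule loc_inv[OF r])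
  finally show ?thesis by simp
qed

definition Rf :: "nat \<Rightarrow> complex \<Rightarrow> nat \<Rightarrow> (nat \<Rightarrow> complex) \<Rightarrow> real" where
  "Rf n r i c = 2 * Re r * (\<Sum>j\<in>{1..<n}-{i}. (cmod (c j))^2)
     + (\<Sum>j\<in>{..<n}-{i-1}-{i}. 2 * Re (- cnj r * cnj (c j) * c (Suc j)))"

lemma QF_split:
  assumes i: "1 \<le> i" "i < n"
  shows "QF n r c = loc r (c (i-1)) (c i) (c (i+1)) + Rf n r i c"
proof -
  have s1: "(\<Sum>j\<in>{1..<n}. (cmod (c j))^2) = (cmod (c i))^2 + (\<Sum>j\<in>{1..<n}-{i}. (cmod (c j))^2)"
    using i by (intro sum.remove) auto
  have s2: "(\<Sum>j<n. 2 * Re (- cnj r * cnj (c j) * c (Suc j)))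
     = 2 * Re (- cnj r * cnj (c (i-1)) * c (Suc (i-1))) + (\<Sum>j\<in>{..<n}-{i-1}. 2 * Re (- cnj r * cnj (c j) * c (Suc j)))"
    using i by (intro sum.remove) auto
  have s3: "(\<Sum>j\<in>{..<n}-{i-1}. 2 * Re (- cnj r * cnj (c j) * c (Suc j)))
     = 2 * Re (- cnj r * cnj (c i) * c (Suc i)) + (\<Sum>j\<in>{..<n}-{i-1}-{i}. 2 * Re (- cnj r * cnj (c j) * c (Suc j)))"
    using i by (intro sum.remove) auto
  have ii: "Suc (i - 1) = i" using i by auto
  show ?thesis unfolding QF_def Rf_def s1 s2 s3 loc_def ii
    by (simp add: algebra_simps)
qed

lemma Rf_cong:
  assumes i: "1 \<le> i" "i < n" and same: "\<And>j. j \<le> n \<Longrightarrow> j \<noteq> i \<Longrightarrow> b j = a j"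
  shows "Rf n r i b = Rf n r i a"
  unfolding Rf_def using i same
  by (intro arg_cong2[where f="(+)"] arg_cong2[where f="(*)"] refl sum.cong) auto

lemma QF_change:
  assumes r: "cmod r = 1" and i: "1 \<le> i" "i < n"
    and same: "\<And>j. j \<le> n \<Longrightarrow> j \<noteq> i \<Longrightarrow> b j = a j"
    and bi: "loc r (a (i-1)) (b i) (a (i+1)) = loc r (a (i-1)) (a i) (a (i+1))"
  shows "QF n r b = QF n r a"
proof -
  have "b (i-1) = a (i-1)" "b (i+1) = a (i+1)" using i same by auto
  thus ?thesis using QF_split[OF i, of r b] QF_split[OF i, of r a] Rf_cong[OF i same, where r=r] bi by simp
qed



lemma burau_carrier: "burau n q w \<in> carrier_mat n n"
proof (induction w)
  case Nil then show ?case by simp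
next
  case (Cons a w)
  obtain i b where a: "a = (i, b)" by (cases a)
  have "burau_gen n q i \<in> carrier_mat n n" "burau_gen_inv n q i \<in> carrier_mat n n"
    by (auto simp: burau_gen_def burau_gen_inv_def)
  then show ?case using Cons a by auto
qed

lemma gen_step:
  fixes b :: bool
  assumes r: "cmod r = 1" and x: "x \<in> carrier_vec n" and i: "1 \<le> i" "i \<le> n - 1"
  defines "G \<equiv> (if b then burau_gen n (r^2) i else burau_gen_inv n (r^2) i)"
  shows "G *\<^sub>v x \<in> carrier_vec n" "ps (G *\<^sub>v x) n = ps x n"
    "QF n r (ps (G *\<^sub>v x)) = QF n r (ps x)"
proof -
  have i2: "1 \<le> i" "i < n" using i by auto
  show "G *\<^sub>v x \<in> carrier_vec n" unfolding G_def
    using gen_facts(1)[OF x i] gen_inv_facts(1)[OF x i] by auto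
  show "ps (G *\<^sub>v x) n = ps x n" unfolding G_def
    using gen_facts(2)[OF x i] gen_inv_facts(2)[OF x i] i2 by auto
  show "QF n r (ps (G *\<^sub>v x)) = QF n r (ps x)"
  proof (cases b)
    case True
    hence G: "G = burau_gen n (r^2) i" unfolding G_def by simp
    show ?thesis unfolding G
    proof (rule QF_change[OF r i2])
      show "\<And>j. j \<le> n \<Longrightarrow> j \<noteq> i \<Longrightarrow> ps (burau_gen n (r\<^sup>2) i *\<^sub>v x) j = ps x j"
        using gen_facts(2)[OF x i] by auto
      have "ps (burau_gen n (r\<^sup>2) i *\<^sub>v x) i = ps x (i+1) + r^2 * ps x (i-1) - r^2 * ps x i"
        using gen_facts(3)[OF x i, of "r^2"] by simp
      then show "loc r (ps x (i - 1)) (ps (burau_gen n (r\<^sup>2) i *\<^sub>v x) i) (ps x (i + 1)) =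
          loc r (ps x (i - 1)) (ps x i) (ps x (i + 1))"
        using loc_inv[OF r] by simp
    qed
  next
    case False
    hence G: "G = burau_gen_inv n (r^2) i" unfolding G_def by simp
    show ?thesis unfolding G
    proof (rule QF_change[OF r i2])
      show "\<And>j. j \<le> n \<Longrightarrow> j \<noteq> i \<Longrightarrow> ps (burau_gen_inv n (r\<^sup>2) i *\<^sub>v x) j = ps x j"
        using gen_inv_facts(2)[OF x i] by auto
      have "ps (burau_gen_inv n (r\<^sup>2) i *\<^sub>v x) i = ps x (i-1) + inverse (r^2) * (ps x (i+1) - ps x i)"
        using gen_inv_facts(3)[OF x i, of "r^2"] by simp
      then show "loc r (ps x (i - 1)) (ps (burau_gen_inv n (r\<^sup>2) i *\<^sub>v x) i) (ps x (i + 1)) =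
          loc r (ps x (i - 1)) (ps x i) (ps x (i + 1))"
        using loc_inv2[OF r] by simp
    qed
  qed
qed

lemma word_facts:
  assumes r: "cmod r = 1" and w: "braid_word n w" and x: "x \<in> carrier_vec n"
  shows "burau n (r^2) w *\<^sub>v x \<in> carrier_vec n \<and> ps (burau n (r^2) w *\<^sub>v x) n = ps x n
    \<and> QF n r (ps (burau n (r^2) w *\<^sub>v x)) = QF n r (ps x)"
  using w
proof (induction w)
  case Nil
  then show ?case using x by simp
next
  case (Cons a w)
  obtain i b where a: "a = (i, b)" by (cases a)
  have bw: "braid_word n w" and i: "1 \<le> i" "i \<le> n - 1"
    using Cons.prems a unfolding braid_word_def by auto
  define G where "G = (if b then burau_gen n (r^2) i else burau_gen_inv n (r^2) i)"
  define y where "y = burau n (r^2) w *\<^sub>v x"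
  have IH: "y \<in> carrier_vec n" "ps y n = ps x n" "QF n r (ps y) = QF n r (ps x)"
    using Cons.IH[OF bw] unfolding y_def by auto
  have Gc: "G \<in> carrier_mat n n" unfolding G_def by (auto simp: burau_gen_def burau_gen_inv_def)
  have e: "burau n (r^2) (a # w) *\<^sub>v x = G *\<^sub>v y"
  proof -
    have "burau n (r^2) (a # w) = G * burau n (r^2) w" by (simp add: a G_def)
    thus ?thesis unfolding y_def using assoc_mult_mat_vec[OF Gc burau_carrier x] by simp
  qed
  show ?case unfolding e using gen_step[OF r IH(1) i, of b] IH unfolding G_def by simp
qed



lemma pair_ineq:
  fixes b w :: "nat \<Rightarrow> real"
  assumes "b 0 = 0" "b n = 0" "w 0 = 0" "w n = 0" "\<And>j. 1 \<le> j \<Longrightarrow> j < n \<Longrightarrow> w j > 0"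
    and "j < n"
  shows "2 * b j * b (Suc j) \<le> (w (Suc j) / w j) * (b j)^2 + (w j / w (Suc j)) * (b (Suc j))^2"
proof (cases "j = 0")
  case True thus ?thesis using assms by simp
next
  case False
  show ?thesis
  proof (cases "Suc j = n")
    case True thus ?thesis using assms by simp
  next
    case False
    have p1: "w j > 0" using assms \<open>j \<noteq> 0\<close> by auto
    have p2: "w (Suc j) > 0" using assms False by auto
    have "0 \<le> (w (Suc j) * b j - w j * b (Suc j))^2" by simp
    hence "2 * b j * b (Suc j) * (w j * w (Suc j)) \<le> (w (Suc j))^2 * (b j)^2 + (w j)^2 * (b (Suc j))^2"
      by (simp add: power2_eq_square algebra_simps)
    thus ?thesis using p1 p2 by (simp add: field_simps power2_eq_square)
  qed
qed

lemma sum_shift_lemma: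
  fixes f :: "nat \<Rightarrow> real"
  shows "(\<Sum>j<n. f (Suc j)) = (\<Sum>k\<in>{1..<Suc n}. f k)"
proof -
  have "(\<Sum>j<n. f (Suc j)) = (\<Sum>j\<in>{0..<n}. f (Suc j))" by (simp add: atLeast0LessThan)
  also have "\<dots> = (\<Sum>k\<in>{Suc 0..<Suc n}. f k)" by (rule sum.shift_bounds_Suc_ivl[symmetric])
  finally show ?thesis by simp
qed

lemma chain_ineq:
  fixes b :: "nat \<Rightarrow> real"
  assumes n: "n \<ge> 1" and b0: "b 0 = 0" and bn: "b n = 0"
  shows "(\<Sum>j<n. 2 * b j * b (Suc j)) \<le> 2 * cos (pi / n) * (\<Sum>j\<in>{1..<n}. (b j)^2)"
proof -
  define w where "w j = sin (real j * pi / real n)" for j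
  have w0: "w 0 = 0" by (simp add: w_def)
  have wn: "w n = 0" using n by (simp add: w_def)
  have wpos: "w j > 0" if "1 \<le> j" "j < n" for j
  proof -
    have "0 < real j * pi / real n" using that by auto
    moreover have "real j * pi / real n < pi" using that by (simp add: field_simps)
    ultimately show ?thesis unfolding w_def by (rule sin_gt_zero)
  qed
  have rec: "w (Suc k) + w (k - 1) = 2 * cos (pi / n) * w k" if "1 \<le> k" for k
  proof -
    have a: "real (Suc k) * pi / real n = real k * pi / real n + pi / n" by (simp add: add_divide_distrib algebra_simps)
    have b: "real (k - 1) * pi / real n = real k * pi / real n - pi / n"
      using that by (simp add: of_nat_diff diff_divide_distrib algebra_simps)
    show ?thesis unfolding w_def a b sin_add sin_diff by simp
  qed
  have "(\<Sum>j<n. 2 * b j * b (Suc j)) \<le> (\<Sum>j<n. (w (Suc j) / w j) * (b j)^2 + (w j / w (Suc j)) * (b (Suc j))^2)"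
    by (rule sum_mono, rule pair_ineq[of b n w], use b0 bn w0 wn wpos in auto)
  also have "\<dots> = (\<Sum>j<n. (w (Suc j) / w j) * (b j)^2) + (\<Sum>j<n. (w j / w (Suc j)) * (b (Suc j))^2)"
    by (rule sum.distrib)
  also have "(\<Sum>j<n. (w (Suc j) / w j) * (b j)^2) = (\<Sum>j\<in>{1..<n}. (w (Suc j) / w j) * (b j)^2)"
  proof -
    have "{..<n} = insert 0 {1..<n}" using n by auto
    thus ?thesis using b0 by simp
  qed
  also have "(\<Sum>j<n. (w j / w (Suc j)) * (b (Suc j))^2) = (\<Sum>k\<in>{1..<Suc n}. (w (k - 1) / w k) * (b k)^2)"
    using sum_shift_lemma[of "\<lambda>k. (w (k - 1) / w k) * (b k)^2" n] by simp
  also have "\<dots> = (\<Sum>k\<in>{1..<n}. (w (k - 1) / w k) * (b k)^2)"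
    using n bn by simp
  also have "(\<Sum>j\<in>{1..<n}. (w (Suc j) / w j) * (b j)^2) + (\<Sum>k\<in>{1..<n}. (w (k - 1) / w k) * (b k)^2)
      = (\<Sum>j\<in>{1..<n}. ((w (Suc j) + w (j - 1)) / w j) * (b j)^2)"
    by (simp add: sum.distrib[symmetric] add_divide_distrib distrib_right)
  also have "\<dots> = (\<Sum>j\<in>{1..<n}. 2 * cos (pi / n) * (b j)^2)"
  proof (rule sum.cong)
    fix j assume "j \<in> {1..<n}"
    hence "1 \<le> j" "j < n" by auto
    thus "((w (Suc j) + w (j - 1)) / w j) * (b j)^2 = 2 * cos (pi / n) * (b j)^2"
      using rec[of j] wpos[of j] by simp
  qed simp
  also have "\<dots> = 2 * cos (pi / n) * (\<Sum>j\<in>{1..<n}. (b j)^2)" by (simp add: sum_distrib_left)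
  finally show ?thesis .
qed

lemma QF_pos:
  assumes r: "cmod r = 1" and c: "cos (pi / n) < Re r" and n: "n \<ge> 1"
    and a0: "a 0 = 0" and an: "a n = 0" and nz: "j \<in> {1..<n}" "a j \<noteq> 0"
  shows "QF n r a > 0"
proof -
  define b where "b j = cmod (a j)" for j
  have t: "Re (- cnj r * cnj (a j) * a (Suc j)) \<ge> - (b j * b (Suc j))" for j
  proof -
    have "- Re (- cnj r * cnj (a j) * a (Suc j)) \<le> cmod (- cnj r * cnj (a j) * a (Suc j))"
      using abs_Re_le_cmod[of "- cnj r * cnj (a j) * a (Suc j)"] by linarith
    also have "\<dots> = b j * b (Suc j)" using r by (simp add: b_def norm_mult)
    finally show ?thesis by linarith
  qed
  have "QF n r a \<ge> 2 * Re r * (\<Sum>j\<in>{1..<n}. (b j)^2) - (\<Sum>j<n. 2 * b j * b (Suc j))"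
  proof -
    have "(\<Sum>j<n. 2 * Re (- cnj r * cnj (a j) * a (Suc j))) \<ge> (\<Sum>j<n. - (2 * b j * b (Suc j)))"
    proof (rule sum_mono)
      fix j show "- (2 * b j * b (Suc j)) \<le> 2 * Re (- cnj r * cnj (a j) * a (Suc j))" using t[of j] by linarith
    qed
    thus ?thesis unfolding QF_def b_def by (simp add: sum_negf)
  qed
  moreover have "(\<Sum>j<n. 2 * b j * b (Suc j)) \<le> 2 * cos (pi / n) * (\<Sum>j\<in>{1..<n}. (b j)^2)"
    by (rule chain_ineq[OF n]) (use a0 an in \<open>auto simp: b_def\<close>)
  moreover have "(\<Sum>j\<in>{1..<n}. (b j)^2) > 0"
    by (rule sum_pos2[of _ j]) (use nz in \<open>auto simp: b_def\<close>)
  ultimately have "QF n r a \<ge> (2 * Re r - 2 * cos (pi / n)) * (\<Sum>j\<in>{1..<n}. (b j)^2)"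
    by (simp add: algebra_simps)
  moreover have "(2 * Re r - 2 * cos (pi / n)) * (\<Sum>j\<in>{1..<n}. (b j)^2) > 0"
    using c \<open>(\<Sum>j\<in>{1..<n}. (b j)^2) > 0\<close> by simp
  ultimately show ?thesis by linarith
qed



lemma QF_cong: "(\<And>j. j \<le> n \<Longrightarrow> a j = b j) \<Longrightarrow> QF n r a = QF n r b"
  unfolding QF_def by (intro arg_cong2[where f="(+)"] arg_cong2[where f="(*)"] refl sum.cong) auto

lemma QF_scale: "QF n r (\<lambda>j. c * a j) = (cmod c)^2 * QF n r a"
proof -
  have e1: "(cmod (c * a j))^2 = (cmod c)^2 * (cmod (a j))^2" for j by (simp add: norm_mult power_mult_distrib)
  have e2: "2 * Re (- cnj r * cnj (c * a j) * (c * a (Suc j))) = (cmod c)^2 * (2 * Re (- cnj r * cnj (a j) * a (Suc j)))" for j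
  proof -
    have "- cnj r * cnj (c * a j) * (c * a (Suc j)) = (c * cnj c) * (- cnj r * cnj (a j) * a (Suc j))"
      by (simp add: algebra_simps)
    hence eq: "- cnj r * cnj (c * a j) * (c * a (Suc j)) = complex_of_real ((cmod c)^2) * (- cnj r * cnj (a j) * a (Suc j))"
      unfolding complex_norm_square .
    have rr: "Re (complex_of_real x * z) = x * Re z" for x z by simp
    have "2 * Re (- cnj r * cnj (c * a j) * (c * a (Suc j))) = 2 * Re (complex_of_real ((cmod c)^2) * (- cnj r * cnj (a j) * a (Suc j)))"
      by (rule arg_cong[where f="\<lambda>z. 2 * Re z"], rule eq)
    also have "\<dots> = 2 * ((cmod c)^2 * Re (- cnj r * cnj (a j) * a (Suc j)))"
      by (rule arg_cong[where f="\<lambda>x. 2 * x"], rule rr)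
    also have "\<dots> = (cmod c)^2 * (2 * Re (- cnj r * cnj (a j) * a (Suc j)))"
      by (rule mult.left_commute)
    finally show ?thesis .
  qed
  show ?thesis unfolding QF_def e1 e2 by (simp add: sum_distrib_left algebra_simps)
qed

lemma smult_mat_vec_index:
  assumes "M \<in> carrier_mat n n" "v \<in> carrier_vec n" "k < n"
  shows "((c \<cdot>\<^sub>m M) *\<^sub>v v) $ k = c * (M *\<^sub>v v) $ k"
  using assms by (simp add: scalar_prod_def sum_distrib_left algebra_simps)

lemma det_cont:
  fixes M :: "complex mat"
  assumes M: "M \<in> carrier_mat n n"
  shows "isCont (\<lambda>z. det (1\<^sub>m n - exp (- z) \<cdot>\<^sub>m M)) s"
proof -
  have "(\<lambda>z. det (1\<^sub>m n - exp (- z) \<cdot>\<^sub>m M)) = (\<lambda>z. \<Sum>p\<in>{p. p permutes {0..<n}}. signof p *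
      (\<Prod>i=0..<n. (if i = p i then 1 else 0) - exp (- z) * M $$ (i, p i)))"
  proof
    fix z
    have c: "1\<^sub>m n - exp (- z) \<cdot>\<^sub>m M \<in> carrier_mat n n" using M by (intro minus_carrier_mat smult_carrier_mat)
    show "det (1\<^sub>m n - exp (- z) \<cdot>\<^sub>m M) = (\<Sum>p\<in>{p. p permutes {0..<n}}. signof p *
      (\<Prod>i=0..<n. (if i = p i then 1 else 0) - exp (- z) * M $$ (i, p i)))"
      unfolding det_def'[OF c]
    proof (rule sum.cong[OF refl])
      fix p assume "p \<in> {p. p permutes {0..<n}}"
      hence p: "p permutes {0..<n}" by simp
      show "signof p * (\<Prod>i = 0..<n. (1\<^sub>m n - exp (- z) \<cdot>\<^sub>m M) $$ (i, p i)) =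
         signof p * (\<Prod>i = 0..<n. (if i = p i then 1 else 0) - exp (- z) * M $$ (i, p i))"
      proof (rule arg_cong[where f="\<lambda>x. signof p * x"], rule prod.cong[OF refl])
        fix i assume i: "i \<in> {0..<n}"
        hence pi: "p i < n" using permutes_in_image[OF p] by auto
        show "(1\<^sub>m n - exp (- z) \<cdot>\<^sub>m M) $$ (i, p i) = (if i = p i then 1 else 0) - exp (- z) * M $$ (i, p i)"
          using i pi M by auto
      qed
    qed
  qed
  moreover have "isCont (\<lambda>z. \<Sum>p\<in>{p. p permutes {0..<n}}. signof p *
      (\<Prod>i=0..<n. (if i = p i then 1 else 0) - exp (- z) * M $$ (i, p i))) s"
    by (intro continuous_intros)
  ultimately show ?thesis by simp
qed



theorem theorem1p2:
  fixes n :: nat and \<theta> :: real and w :: braid_word and s :: complex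
  assumes "n \<ge> 2"
    and "\<bar>\<theta>\<bar> < 2 * pi / real n"
    and "braid_word n w"
    and "is_pole (\<lambda>z. braid_zeta n (exp (\<i> * complex_of_real \<theta>)) w (exp (- z))) s"
  shows "Re s = 0"
proof -
  note n = assms(1) and th = assms(2) and bw = assms(3) and pole = assms(4)
  define r where "r = exp (\<i> * complex_of_real (\<theta> / 2))"
  have r1: "cmod r = 1" unfolding r_def by simp
  have rq: "r^2 = exp (\<i> * complex_of_real \<theta>)"
    unfolding r_def by (simp add: exp_double[symmetric] power2_eq_square exp_add[symmetric])
  have Rer: "Re r = cos (\<theta> / 2)" unfolding r_def by (simp add: Re_exp)
  have cosc: "cos (pi / n) < Re r"
  proof -
    have "\<bar>\<theta> / 2\<bar> < pi / n" using th by (simp add: field_simps)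
    moreover have "pi / n \<le> pi" using n by (simp add: field_simps)
    ultimately have "cos (pi / n) < cos \<bar>\<theta> / 2\<bar>" by (intro cos_monotone_0_pi) auto
    thus ?thesis unfolding Rer by (cases "\<theta> \<ge> 0") auto
  qed
  define M where "M = burau n (r^2) w"
  have Mc: "M \<in> carrier_mat n n" unfolding M_def by (rule burau_carrier)
  define c where "c = exp (- s)"
  define A where "A = 1\<^sub>m n - c \<cdot>\<^sub>m M"
  have Ac: "A \<in> carrier_mat n n" unfolding A_def using Mc by (intro minus_carrier_mat smult_carrier_mat)
  have detA: "det A = 0"
  proof (rule ccontr)
    assume d: "det A \<noteq> 0"
    have f: "(\<lambda>z. braid_zeta n (exp (\<i> * complex_of_real \<theta>)) w (exp (- z))) = (\<lambda>z. inverse (det (1\<^sub>m n - exp (- z) \<cdot>\<^sub>m M)))"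
      unfolding braid_zeta_def M_def rq by simp
    have "isCont (\<lambda>z. inverse (det (1\<^sub>m n - exp (- z) \<cdot>\<^sub>m M))) s"
      using det_cont[OF Mc, of s] d unfolding A_def c_def by (intro continuous_intros) auto
    hence "((\<lambda>z. inverse (det (1\<^sub>m n - exp (- z) \<cdot>\<^sub>m M))) \<longlongrightarrow> inverse (det A)) (at s)"
      unfolding A_def c_def by (simp add: isCont_def)
    moreover have "filterlim (\<lambda>z. inverse (det (1\<^sub>m n - exp (- z) \<cdot>\<^sub>m M))) at_infinity (at s)"
      using pole unfolding is_pole_def f .
    ultimately show False
      by (intro not_tendsto_and_filterlim_at_infinity[of "at s"]) auto
  qed
  obtain v where v: "v \<in> carrier_vec n" "v \<noteq> 0\<^sub>v n" "A *\<^sub>v v = 0\<^sub>v n"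
    using det_0_iff_vec_prod_zero[OF Ac] detA by auto
  define u where "u = M *\<^sub>v v"
  have uc: "u \<in> carrier_vec n" unfolding u_def using Mc v(1) by simp
  have vu: "v $ k = c * u $ k" if "k < n" for k
  proof -
    have "(A *\<^sub>v v) $ k = 0" using v(3) that by simp
    moreover have "A *\<^sub>v v = 1\<^sub>m n *\<^sub>v v - (c \<cdot>\<^sub>m M) *\<^sub>v v"
      unfolding A_def using Mc v(1) by (intro minus_mult_distrib_mat_vec) auto
    ultimately have "v $ k - ((c \<cdot>\<^sub>m M) *\<^sub>v v) $ k = 0" using that v(1) Mc by simp
    thus ?thesis using smult_mat_vec_index[OF Mc v(1) that, of c] unfolding u_def by simp
  qed
  have psvu: "ps v j = c * ps u j" if "j \<le> n" for j
    unfolding ps_def using that vu by (simp add: sum_distrib_left)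
  have WF: "ps u n = ps v n" "QF n r (ps u) = QF n r (ps v)"
    using word_facts[OF r1 bw v(1)] unfolding u_def M_def by auto
  have cabs: "cmod c = 1"
  proof (cases "ps v n = 0")
    case False
    have "ps v n = c * ps v n" using psvu[of n] WF(1) by simp
    hence "c = 1" using False by simp
    thus ?thesis by simp
  next
    case True
    have ex: "\<exists>j\<in>{1..<n}. ps v j \<noteq> 0"
    proof (rule ccontr)
      assume "\<not> ?thesis"
      hence z: "ps v j = 0" if "j \<le> n" for j
        using that True by (cases "j = 0"; cases "j = n") (auto simp: ps_def)
      have "v = 0\<^sub>v n"
      proof (rule eq_vecI)
        fix k assume "k < dim_vec (0\<^sub>v n :: complex vec)"
        hence k: "k < n" by simp
        have "v $ k = ps v (Suc k) - ps v k" by (simp add: ps_Suc)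
        thus "v $ k = 0\<^sub>v n $ k" using z[of k] z[of "Suc k"] k by simp
      qed (use v(1) in simp)
      thus False using v(2) by simp
    qed
    then obtain j where j: "j \<in> {1..<n}" "ps v j \<noteq> 0" by auto
    have pos: "QF n r (ps v) > 0"
      by (rule QF_pos[OF r1 cosc _ _ True j]) (use n in \<open>auto simp: ps_def\<close>)
    have "QF n r (ps v) = QF n r (\<lambda>j. c * ps u j)" by (rule QF_cong) (simp add: psvu)
    also have "\<dots> = (cmod c)^2 * QF n r (ps u)" by (rule QF_scale)
    also have "\<dots> = (cmod c)^2 * QF n r (ps v)" using WF(2) by simp
    finally have "(cmod c)^2 = 1" using pos by simp
    thus ?thesis using norm_ge_zero[of c] by (auto simp add: power2_eq_1_iff)
  qed
  hence "exp (- Re s) = 1" unfolding c_def by (simp add: norm_exp_eq_Re)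
  thus ?thesis by simp
qed


end
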